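(* Let $P=(X,\leq)$ be a $(3+1)$-free partially ordered set with no infinite antichains. Then there exist a partition of $X$ into antichains and a chain $C\subseteq X$ of $P$ such that $C$ intersects every member of the partition.
   Context: A poset is $(3+1)$-free if it contains no induced subposet isomorphic to the disjoint union of a $3$-element chain and a $1$-element chain (i.e., there are no elements $a<b<c$ and $d$ with $d$ incomparable to each of $a,b,c$). An antichain is a set of pairwise incomparable elements; a chain is a set of pairwise comparable elements. *)

theory Defs
  imports Main
begin

definition partial_order_on_set :: "'a set \<Rightarrow> ('a \<Rightarrow> 'a \<Rightarrow> bool) \<Rightarrow> bool" where
  "partial_order_on_set X le \<longleftrightarrow>
     (\<forall>x\<in>X. le x x) \<and>
     (\<forall>x\<in>X. \<forall>y\<in>X. le x y \<and> le y x \<longrightarrow> x = y) \<and>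
     (\<forall>x\<in>X. \<forall>y\<in>X. \<forall>z\<in>X. le x y \<and> le y z \<longrightarrow> le x z)"

definition comparable :: "('a \<Rightarrow> 'a \<Rightarrow> bool) \<Rightarrow> 'a \<Rightarrow> 'a \<Rightarrow> bool" where
  "comparable le x y \<longleftrightarrow> le x y \<or> le y x"

definition is_antichain :: "'a set \<Rightarrow> ('a \<Rightarrow> 'a \<Rightarrow> bool) \<Rightarrow> 'a set \<Rightarrow> bool" where
  "is_antichain X le A \<longleftrightarrow> A \<subseteq> X \<and>
     (\<forall>x\<in>A. \<forall>y\<in>A. x \<noteq> y \<longrightarrow> \<not> comparable le x y)"

definition is_chain :: "'a set \<Rightarrow> ('a \<Rightarrow> 'a \<Rightarrow> bool) \<Rightarrow> 'a set \<Rightarrow> bool" where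
  "is_chain X le C \<longleftrightarrow> C \<subseteq> X \<and> (\<forall>x\<in>C. \<forall>y\<in>C. comparable le x y)"

definition three_plus_one_free :: "'a set \<Rightarrow> ('a \<Rightarrow> 'a \<Rightarrow> bool) \<Rightarrow> bool" where
  "three_plus_one_free X le \<longleftrightarrow>
     \<not> (\<exists>a\<in>X. \<exists>b\<in>X. \<exists>c\<in>X. \<exists>d\<in>X.
          le a b \<and> a \<noteq> b \<and> le b c \<and> b \<noteq> c \<and>
          \<not> comparable le d a \<and> \<not> comparable le d b \<and> \<not> comparable le d c)"

definition is_partition :: "'a set \<Rightarrow> 'a set set \<Rightarrow> bool" where
  "is_partition X \<P> \<longleftrightarrow> \<Union>\<P> = X \<and> {} \<notin> \<P> \<and>
     (\<forall>A\<in>\<P>. \<forall>B\<in>\<P>. A \<noteq> B \<longrightarrow> A \<inter> B = {})"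

end

theory Submission imports Defs begin

lemma compactness:
  fixes D :: "'i \<Rightarrow> 'v set" and K :: "'k set" and supp :: "'k \<Rightarrow> 'i set"
    and ok :: "'k \<Rightarrow> ('i \<Rightarrow> 'v) \<Rightarrow> bool"
  assumes finD: "\<And>i. finite (D i)"
    and finS: "\<And>k. k\<in>K \<Longrightarrow> finite (supp k)"
    and loc: "\<And>k f g. k\<in>K \<Longrightarrow> (\<And>i. i\<in>supp k \<Longrightarrow> f i = g i) \<Longrightarrow> ok k f = ok k g"
    and sat: "\<And>K'. K'\<subseteq>K \<Longrightarrow> finite K' \<Longrightarrow> \<exists>f. (\<forall>i. f i \<in> D i) \<and> (\<forall>k\<in>K'. ok k f)"
  shows "\<exists>f. (\<forall>i. f i \<in> D i) \<and> (\<forall>k\<in>K. ok k f)"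
proof -
  define good where "good S \<longleftrightarrow> (\<forall>K'\<subseteq>K. finite K' \<longrightarrow> (\<exists>f. (\<forall>i. f i \<in> S i) \<and> (\<forall>k\<in>K'. ok k f)))"
    for S :: "'i \<Rightarrow> 'v set"
  define SE where "SE E = (\<lambda>i. {v\<in>D i. (i,v) \<notin> E})" for E :: "('i\<times>'v) set"
  define A where "A = {E. good (SE E)}"
  have SEmono: "E \<subseteq> E' \<Longrightarrow> SE E' j \<subseteq> SE E j" for E E' j by (auto simp: SE_def)
  have "\<forall>Ch\<in>chains A. \<Union>Ch \<in> A"
  proof
    fix Ch assume Ch: "Ch \<in> chains A"
    show "\<Union>Ch \<in> A"
    proof (cases "Ch = {}")
      case True
      then have "SE (\<Union>Ch) = D" by (auto simp: SE_def)
      then show ?thesis using sat by (auto simp: A_def good_def)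
    next
      case False
      have chA: "Ch \<subseteq> A" and chn: "chain\<^sub>\<subseteq> Ch" using Ch by (auto simp: chains_def)
      have stab: "\<exists>E\<in>Ch. SE E j = SE (\<Union>Ch) j" for j
      proof -
        obtain E1 where "E1 \<in> Ch" using False by blast
        then obtain E0 where E0: "E0 \<in> Ch" "\<forall>E. E\<in>Ch \<longrightarrow> card (SE E0 j) \<le> card (SE E j)"
          using ex_has_least_nat[of "\<lambda>E. E \<in> Ch" E1 "\<lambda>E. card (SE E j)"] by blast
        have "SE E0 j = SE (\<Union>Ch) j"
        proof
          show "SE (\<Union>Ch) j \<subseteq> SE E0 j" using E0 by (auto simp: SE_def)
          show "SE E0 j \<subseteq> SE (\<Union>Ch) j"
          proof
            fix v assume v: "v \<in> SE E0 j"
            show "v \<in> SE (\<Union>Ch) j"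
            proof (rule ccontr)
              assume "v \<notin> SE (\<Union>Ch) j"
              then obtain E where E: "E\<in>Ch" "(j,v)\<in>E" using v by (auto simp: SE_def)
              from chn E0(1) E(1) have "E \<subseteq> E0 \<or> E0 \<subseteq> E" by (auto simp: chain_subset_def)
              then show False
              proof
                assume "E \<subseteq> E0" then show False using v E by (auto simp: SE_def)
              next
                assume "E0 \<subseteq> E"
                then have sub: "SE E j \<subseteq> SE E0 j" by (rule SEmono)
                have "v \<notin> SE E j" using E by (auto simp: SE_def)
                then have "SE E j \<subset> SE E0 j" using sub v by auto
                moreover have "finite (SE E0 j)" using finD[of j] by (auto simp: SE_def)
                ultimately have "card (SE E j) < card (SE E0 j)" by (simp add: psubset_card_mono)
                then show False using E0(2) E(1) by fastforce
              qed
            qed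
          qed
        qed
        then show ?thesis using E0(1) by blast
      qed
      have lowb: "E \<in> Ch \<Longrightarrow> SE (\<Union>Ch) j \<subseteq> SE E j" for E j by (rule SEmono) auto
      have stabF: "finite F \<Longrightarrow> \<exists>E\<in>Ch. \<forall>j\<in>F. SE E j = SE (\<Union>Ch) j" for F
      proof (induction F rule: finite_induct)
        case empty then show ?case using False by auto
      next
        case (insert x F)
        obtain E1 where E1: "E1\<in>Ch" "\<forall>j\<in>F. SE E1 j = SE (\<Union>Ch) j" using insert.IH by blast
        obtain E2 where E2: "E2\<in>Ch" "SE E2 x = SE (\<Union>Ch) x" using stab by blast
        have "E1 \<subseteq> E2 \<or> E2 \<subseteq> E1" using chn E1(1) E2(1) by (auto simp: chain_subset_def)
        then show ?case
        proof
          assume "E1 \<subseteq> E2"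
          then have "\<forall>j\<in>insert x F. SE E2 j = SE (\<Union>Ch) j"
            using E1 E2 SEmono[of E1 E2] lowb[OF E2(1)] by (metis insert_iff subset_antisym)
          then show ?case using E2(1) by blast
        next
          assume "E2 \<subseteq> E1"
          then have "\<forall>j\<in>insert x F. SE E1 j = SE (\<Union>Ch) j"
            using E1 E2 SEmono[of E2 E1] lowb[OF E1(1)] by (metis insert_iff subset_antisym)
          then show ?case using E1(1) by blast
        qed
      qed
      have nonemp: "\<exists>v. v \<in> SE (\<Union>Ch) j" for j
      proof -
        obtain E where E: "E\<in>Ch" "SE E j = SE (\<Union>Ch) j" using stab by blast
        then have "good (SE E)" using chA by (auto simp: A_def)
        then obtain f where "\<forall>i. f i \<in> SE E i" unfolding good_def by blast
        then show ?thesis using E by auto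
      qed
      show "\<Union>Ch \<in> A" unfolding A_def good_def mem_Collect_eq
      proof (intro allI impI)
        fix K' assume K': "K' \<subseteq> K" "finite K'"
        define F where "F = \<Union>(supp ` K')"
        have "finite F" unfolding F_def using K' finS by auto
        then obtain E where E: "E\<in>Ch" "\<forall>j\<in>F. SE E j = SE (\<Union>Ch) j" using stabF by blast
        then have "good (SE E)" using chA by (auto simp: A_def)
        then obtain f where f: "\<forall>i. f i \<in> SE E i" "\<forall>k\<in>K'. ok k f" unfolding good_def using K' by blast
        define f' where "f' i = (if i \<in> F then f i else (SOME v. v \<in> SE (\<Union>Ch) i))" for i
        have "f' i \<in> SE (\<Union>Ch) i" for i
          using f(1) E(2) someI_ex[OF nonemp[of i]] by (auto simp: f'_def)
        moreover have "ok k f'" if k: "k \<in> K'" for k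
        proof -
          have "ok k f' = ok k f"
            by (rule loc) (use k K' in \<open>auto simp: f'_def F_def\<close>)
          then show ?thesis using f(2) k by simp
        qed
        ultimately show "\<exists>f. (\<forall>i. f i \<in> SE (\<Union>Ch) i) \<and> (\<forall>k\<in>K'. ok k f)" by blast
      qed
    qed
  qed
  then obtain M where M: "M\<in>A" "\<forall>X\<in>A. M \<subseteq> X \<longrightarrow> X = M" using Zorn_Lemma by blast
  have gM: "good (SE M)" using M by (simp add: A_def)
  have single: "\<exists>v. SE M i = {v}" for i
  proof -
    obtain f0 where "\<forall>i. f0 i \<in> SE M i" using gM unfolding good_def by blast
    then obtain a where a: "a \<in> SE M i" by blast
    have "b = a" if b: "b \<in> SE M i" for b
    proof (rule ccontr)
      assume ab: "b \<noteq> a"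
      have bad: "\<exists>K1\<subseteq>K. finite K1 \<and> (\<forall>f. (\<forall>j. f j \<in> SE M j) \<longrightarrow> f i \<noteq> c \<longrightarrow> \<not> (\<forall>k\<in>K1. ok k f))"
        if c: "c \<in> SE M i" for c
      proof -
        have "(i,c) \<notin> M" using c by (auto simp: SE_def)
        then have "insert (i,c) M \<notin> A" using M(2) by blast
        then have "\<not> good (SE (insert (i,c) M))" by (simp add: A_def)
        then obtain K1 where K1: "K1 \<subseteq> K" "finite K1"
          "\<forall>f. (\<forall>j. f j \<in> SE (insert (i,c) M) j) \<longrightarrow> \<not> (\<forall>k\<in>K1. ok k f)"
          unfolding good_def by blast
        have "\<forall>f. (\<forall>j. f j \<in> SE M j) \<longrightarrow> f i \<noteq> c \<longrightarrow> \<not> (\<forall>k\<in>K1. ok k f)"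
        proof (intro allI impI)
          fix f assume "\<forall>j. f j \<in> SE M j" "f i \<noteq> c"
          then have "\<forall>j. f j \<in> SE (insert (i,c) M) j" by (auto simp: SE_def)
          then show "\<not> (\<forall>k\<in>K1. ok k f)" using K1(3) by blast
        qed
        then show ?thesis using K1(1,2) by blast
      qed
      obtain K1 where K1: "K1\<subseteq>K" "finite K1" "\<forall>f. (\<forall>j. f j \<in> SE M j) \<longrightarrow> f i \<noteq> a \<longrightarrow> \<not> (\<forall>k\<in>K1. ok k f)"
        using bad[OF a] by blast
      obtain K2 where K2: "K2\<subseteq>K" "finite K2" "\<forall>f. (\<forall>j. f j \<in> SE M j) \<longrightarrow> f i \<noteq> b \<longrightarrow> \<not> (\<forall>k\<in>K2. ok k f)"
        using bad[OF b] by blast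
      obtain f where f: "\<forall>j. f j \<in> SE M j" "\<forall>k\<in>K1 \<union> K2. ok k f"
        using gM K1 K2 unfolding good_def by (metis finite_UnI le_sup_iff)
      show False using K1(3) K2(3) f ab by (metis UnCI)
    qed
    then show ?thesis using a by blast
  qed
  define f where "f i = (SOME v. SE M i = {v})" for i
  have fM: "SE M i = {f i}" for i unfolding f_def using someI_ex[OF single[of i]] by simp
  have "ok k f" if k: "k \<in> K" for k
  proof -
    obtain f' where f': "\<forall>i. f' i \<in> SE M i" "\<forall>k'\<in>{k}. ok k' f'" using gM k unfolding good_def
      by (metis empty_subsetI finite.emptyI finite_insert insert_subset)
    have "f' = f" using f'(1) fM by auto
    then show ?thesis using f' by simp
  qed
  moreover have "f i \<in> D i" for i using fM[of i] by (auto simp: SE_def)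
  ultimately show ?thesis by blast
qed


lemma exists_maximal:
  assumes po: "partial_order_on_set X le" and fin: "finite A" and AX: "A \<subseteq> X" and t: "t \<in> A"
  shows "\<exists>m\<in>A. le t m \<and> (\<forall>y\<in>A. le m y \<longrightarrow> y = m)"
proof -
  have refl: "\<And>x. x\<in>X \<Longrightarrow> le x x" and anti: "\<And>x y. x\<in>X \<Longrightarrow> y\<in>X \<Longrightarrow> le x y \<Longrightarrow> le y x \<Longrightarrow> x = y"
    and trans: "\<And>x y z. x\<in>X \<Longrightarrow> y\<in>X \<Longrightarrow> z\<in>X \<Longrightarrow> le x y \<Longrightarrow> le y z \<Longrightarrow> le x z"
    using po unfolding partial_order_on_set_def by blast+
  define dn where "dn y = {z\<in>A. le z y}" for y
  have tU: "t \<in> A \<and> le t t" using t AX refl by auto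
  obtain m where m: "m \<in> A \<and> le t m" "\<forall>y. y \<in> A \<and> le t y \<longrightarrow> card A - card (dn m) \<le> card A - card (dn y)"
    using ex_has_least_nat[of "\<lambda>y. y \<in> A \<and> le t y" t "\<lambda>y. card A - card (dn y)"] tU by blast
  have "y = m" if y: "y \<in> A" "le m y" for y
  proof (rule ccontr)
    assume ne: "y \<noteq> m"
    have ty: "le t y" using trans[of t m y] m(1) y AX t by auto
    have sub: "dn m \<subseteq> dn y" unfolding dn_def using trans[of _ m y] y m(1) AX by auto
    have "y \<in> dn y" using y AX refl by (auto simp: dn_def)
    moreover have "y \<notin> dn m" using anti[of y m] y m(1) AX ne by (auto simp: dn_def)
    ultimately have "dn m \<subset> dn y" using sub by auto
    moreover have "finite (dn y)" using fin by (auto simp: dn_def)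
    ultimately have "card (dn m) < card (dn y)" by (simp add: psubset_card_mono)
    moreover have "card (dn y) \<le> card A" using fin by (auto simp: dn_def intro: card_mono)
    ultimately have "card A - card (dn y) < card A - card (dn m)" by linarith
    then show False using m(2) y ty by fastforce
  qed
  then show ?thesis using m(1) by blast
qed

lemma finite_case:
  assumes po: "partial_order_on_set X le"
  shows "finite F \<Longrightarrow> F \<subseteq> X \<Longrightarrow> \<exists>C g. C \<subseteq> F \<and> (\<forall>x\<in>C. \<forall>y\<in>C. comparable le x y) \<and> (\<forall>x\<in>F. g x \<in> C)
     \<and> (\<forall>c\<in>C. g c = c) \<and> (\<forall>x\<in>F. \<forall>y\<in>F. x \<noteq> y \<and> g x = g y \<longrightarrow> \<not> comparable le x y)"
proof (induction F rule: finite_psubset_induct)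
  case (psubset F)
  have refl: "\<And>x. x\<in>X \<Longrightarrow> le x x"
    and trans: "\<And>x y z. x\<in>X \<Longrightarrow> y\<in>X \<Longrightarrow> z\<in>X \<Longrightarrow> le x y \<Longrightarrow> le y z \<Longrightarrow> le x z"
    using po unfolding partial_order_on_set_def by blast+
  show ?case
  proof (cases "F = {}")
    case True
    then show ?thesis by (rule_tac x="{}" in exI) auto
  next
    case False
    define M where "M = {x\<in>F. \<forall>y\<in>F. le x y \<longrightarrow> y = x}"
    obtain t0 where "t0 \<in> F" using False by blast
    then obtain m0 where m0: "m0 \<in> M" using exists_maximal[OF po psubset(1,3)] unfolding M_def by blast
    have "F - M \<subset> F" using m0 M_def by auto
    then obtain C' g' where C': "C' \<subseteq> F - M" "\<forall>x\<in>C'. \<forall>y\<in>C'. comparable le x y" "\<forall>x\<in>F - M. g' x \<in> C'"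
      "\<forall>c\<in>C'. g' c = c" "\<forall>x\<in>F - M. \<forall>y\<in>F - M. x \<noteq> y \<and> g' x = g' y \<longrightarrow> \<not> comparable le x y"
      using psubset(2)[of "F - M"] psubset(3) by blast
    have "\<exists>m\<in>M. \<forall>c\<in>C'. le c m"
    proof (cases "C' = {}")
      case True then show ?thesis using m0 by blast
    next
      case False
      then obtain t where "t \<in> C'" by blast
      moreover have "finite C'" using C'(1) psubset(1) finite_subset by blast
      ultimately obtain t' where t': "t' \<in> C'" "\<forall>y\<in>C'. le t' y \<longrightarrow> y = t'"
        using exists_maximal[OF po, of C' t] C'(1) psubset(3) by blast
      have top: "\<forall>c\<in>C'. le c t'"
      proof
        fix c assume c: "c \<in> C'"
        then have "le c t' \<or> le t' c" using C'(2) t'(1) by (auto simp: comparable_def)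
        then show "le c t'" using t'(2) c refl C'(1) psubset(3) by blast
      qed
      have t'F: "t' \<in> F" using t'(1) C'(1) by blast
      obtain m where m: "m \<in> F" "le t' m" "\<forall>y\<in>F. le m y \<longrightarrow> y = m"
        using exists_maximal[OF po psubset(1,3) t'F] by blast
      have "m \<in> M" using m by (auto simp: M_def)
      moreover have "\<forall>c\<in>C'. le c m"
        using top m trans C'(1) psubset(3) t'F by (meson Diff_subset subset_iff)
      ultimately show ?thesis by blast
    qed
    then obtain m where m: "m \<in> M" "\<forall>c\<in>C'. le c m" by blast
    have mF: "m \<in> F" using m M_def by auto
    define g where "g x = (if x \<in> M then m else g' x)" for x
    have "insert m C' \<subseteq> F" using mF C'(1) by auto
    moreover have "\<forall>x\<in>insert m C'. \<forall>y\<in>insert m C'. comparable le x y"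
      using C'(2) m(2) refl mF psubset(3) by (auto simp: comparable_def)
    moreover have "\<forall>x\<in>F. g x \<in> insert m C'" using C'(3) by (auto simp: g_def)
    moreover have "\<forall>c\<in>insert m C'. g c = c" using C'(4) C'(1) m(1) by (auto simp: g_def)
    moreover have "\<forall>x\<in>F. \<forall>y\<in>F. x \<noteq> y \<and> g x = g y \<longrightarrow> \<not> comparable le x y"
    proof (intro ballI impI)
      fix x y assume xy: "x \<in> F" "y \<in> F" "x \<noteq> y \<and> g x = g y"
      show "\<not> comparable le x y"
      proof (cases "x \<in> M")
        case True
        show ?thesis
        proof (cases "y \<in> M")
          case True
          then show ?thesis using \<open>x \<in> M\<close> xy by (auto simp: M_def comparable_def)
        next
          case False
          then have "g' y \<in> C'" using C'(3) xy by auto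
          then show ?thesis using xy False True m(1) C'(1) by (auto simp: g_def)
        qed
      next
        case False
        show ?thesis
        proof (cases "y \<in> M")
          case True
          then have "g' x \<in> C'" using C'(3) xy False by auto
          then show ?thesis using xy False True m(1) C'(1) by (auto simp: g_def)
        next
          case nM: False
          then show ?thesis using C'(5) xy False by (auto simp: g_def)
        qed
      qed
    qed
    ultimately show ?thesis by blast
  qed
qed

lemma inc_finite:
  assumes po: "partial_order_on_set X le" and free: "three_plus_one_free X le"
    and noinf: "\<And>A. is_antichain X le A \<Longrightarrow> finite A" and x: "x \<in> X"
  shows "finite {y\<in>X. \<not> comparable le x y}"
proof -
  define J where "J = {y\<in>X. \<not> comparable le x y}"
  define Mn where "Mn = {y\<in>J. \<forall>z\<in>J. le z y \<longrightarrow> z = y}"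
  have "is_antichain X le Mn"
    unfolding is_antichain_def comparable_def Mn_def J_def by blast
  then have f1: "finite Mn" by (rule noinf)
  have "is_antichain X le (J - Mn)"
    unfolding is_antichain_def
  proof (intro conjI ballI impI)
    show "J - Mn \<subseteq> X" by (auto simp: J_def)
    have key: "\<not> le y y'" if y: "y \<in> J - Mn" "y' \<in> J - Mn" "y \<noteq> y'" for y y'
    proof
      assume le: "le y y'"
      obtain z where z: "z \<in> J" "le z y" "z \<noteq> y" using y(1) by (auto simp: Mn_def)
      show False using free z y le unfolding three_plus_one_free_def J_def
        using x by blast
    qed
    fix y y' assume "y \<in> J - Mn" "y' \<in> J - Mn" "y \<noteq> y'"
    then show "\<not> comparable le y y'" using key unfolding comparable_def by metis
  qed
  then have "finite (J - Mn)" by (rule noinf)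
  then show ?thesis using f1 unfolding J_def[symmetric] by (metis Un_Diff_cancel2 finite_UnI finite_Un)
qed


theorem mainTheorem2:
  fixes X :: "'a set" and le :: "'a \<Rightarrow> 'a \<Rightarrow> bool"
  assumes "partial_order_on_set X le"
    and "three_plus_one_free X le"
    and "\<And>A. is_antichain X le A \<Longrightarrow> finite A"
  shows "\<exists>\<P> C. is_partition X \<P> \<and> (\<forall>A\<in>\<P>. is_antichain X le A) \<and>
               is_chain X le C \<and> (\<forall>A\<in>\<P>. C \<inter> A \<noteq> {})"
proof -
  note po = assms(1)
  define inc where "inc x = {z\<in>X. \<not> comparable le x z}" for x :: 'a
  have incfin: "x \<in> X \<Longrightarrow> finite (inc x)" for x
    unfolding inc_def using inc_finite[OF assms] by blast
  define D where "D x = (if x \<in> X then (insert x (inc x)) \<times> (UNIV :: bool set) else {(x,False)})" for x :: 'a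
  define K where "K = X \<times> X"
  define supp where "supp k = insert (fst k) (insert (snd k) (inc (fst k)))" for k :: "'a \<times> 'a"
  define ok where "ok k f = (let x = fst k; y = snd k in
      (snd (f x) \<and> snd (f y) \<longrightarrow> comparable le x y) \<and> (snd (f x) \<longrightarrow> fst (f x) = x) \<and>
      (fst (f x) \<in> insert x (inc x)) \<and> (\<forall>z\<in>insert x (inc x). fst (f x) = z \<longrightarrow> snd (f z)) \<and>
      (x \<noteq> y \<and> fst (f x) = fst (f y) \<longrightarrow> \<not> comparable le x y))"
    for k :: "'a \<times> 'a" and f :: "'a \<Rightarrow> 'a \<times> bool"
  have "\<exists>f. (\<forall>i. f i \<in> D i) \<and> (\<forall>k\<in>K. ok k f)"
  proof (rule compactness)
    show "finite (D i)" for i using incfin by (auto simp: D_def)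
    show "finite (supp k)" if "k \<in> K" for k using that incfin by (auto simp: supp_def K_def)
    show "ok k f = ok k g" if "k \<in> K" "\<And>i. i \<in> supp k \<Longrightarrow> f i = g i" for k f g
    proof -
      obtain x y where k: "k = (x,y)" by (cases k)
      have "f x = g x" "f y = g y" "\<forall>z\<in>inc x. f z = g z" using that(2) by (auto simp: supp_def k)
      then show ?thesis unfolding ok_def k Let_def by auto
    qed
    show "\<exists>f. (\<forall>i. f i \<in> D i) \<and> (\<forall>k\<in>K'. ok k f)" if K': "K' \<subseteq> K" "finite K'" for K'
    proof -
      define F where "F = \<Union>(supp ` K')"
      have FX: "F \<subseteq> X" using K' by (auto simp: F_def supp_def K_def inc_def)
      have "finite F" using K' incfin by (auto simp: F_def supp_def K_def)
      then obtain C g where Cg: "C \<subseteq> F" "\<forall>x\<in>C. \<forall>y\<in>C. comparable le x y" "\<forall>x\<in>F. g x \<in> C"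
        "\<forall>c\<in>C. g c = c" "\<forall>x\<in>F. \<forall>y\<in>F. x \<noteq> y \<and> g x = g y \<longrightarrow> \<not> comparable le x y"
        using finite_case[OF po _ FX] by blast
      have gin: "g z \<in> insert z (inc z)" if z: "z \<in> F" for z
      proof (cases "g z = z")
        case False
        have "g z \<in> F" using Cg z by auto
        moreover have "g (g z) = g z" using Cg z by auto
        ultimately have "\<not> comparable le z (g z)" using Cg(5) z False by metis
        then show ?thesis using \<open>g z \<in> F\<close> FX by (auto simp: inc_def)
      qed simp
      define f where "f z = (if z \<in> F then g z else z, z \<in> C)" for z
      have "f i \<in> D i" for i
        using gin Cg(1) FX by (auto simp: f_def D_def)
      moreover have "ok k f" if k: "k \<in> K'" for k
      proof -
        obtain x y where kxy: "k = (x,y)" by (cases k)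
        have xF: "x \<in> F" "y \<in> F" "inc x \<subseteq> F" using k unfolding F_def by (auto simp: supp_def kxy intro!: bexI[of _ "(x,y)"])
        show ?thesis unfolding ok_def kxy Let_def fst_conv snd_conv
          using xF Cg gin by (auto simp: f_def)
      qed
      ultimately show ?thesis by blast
    qed
  qed
  then obtain f where f: "\<forall>i. f i \<in> D i" "\<forall>k\<in>K. ok k f" by blast
  define g where "g x = fst (f x)" for x
  define C where "C = {x\<in>X. snd (f x)}"
  have okxy: "ok (x,y) f" if "x \<in> X" "y \<in> X" for x y using f(2) that by (auto simp: K_def)
  have gX: "g x \<in> X" and gC: "g x \<in> C" if x: "x \<in> X" for x
  proof -
    have "g x \<in> insert x (inc x)" "snd (f (g x))"
      using okxy[OF x x] unfolding ok_def Let_def g_def by auto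
    then show "g x \<in> X" "g x \<in> C" using x by (auto simp: inc_def C_def)
  qed
  have gid: "g c = c" if "c \<in> C" for c using okxy[of c c] that unfolding ok_def Let_def g_def C_def by auto
  have fib: "\<not> comparable le x y" if "x \<in> X" "y \<in> X" "x \<noteq> y" "g x = g y" for x y
    using okxy[OF that(1,2)] that(3,4) unfolding ok_def Let_def g_def by auto
  have chn: "comparable le x y" if "x \<in> C" "y \<in> C" for x y
    using okxy[of x y] that unfolding ok_def Let_def C_def by auto
  define P where "P = (\<lambda>c. {y\<in>X. g y = c}) ` C"
  have "is_partition X P"
    unfolding is_partition_def
  proof (intro conjI)
    show "\<Union>P = X"
    proof
      show "\<Union>P \<subseteq> X" by (auto simp: P_def)
      show "X \<subseteq> \<Union>P" using gC by (auto simp: P_def)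
    qed
    show "{} \<notin> P" using gid by (auto simp: P_def C_def)
    show "\<forall>A\<in>P. \<forall>B\<in>P. A \<noteq> B \<longrightarrow> A \<inter> B = {}" by (auto simp: P_def)
  qed
  moreover have "\<forall>A\<in>P. is_antichain X le A"
    using fib by (auto simp: P_def is_antichain_def)
  moreover have "is_chain X le C" using chn by (auto simp: is_chain_def C_def)
  moreover have "\<forall>A\<in>P. C \<inter> A \<noteq> {}"
    using gid by (auto simp: P_def C_def)
  ultimately show ?thesis by blast
qed

end
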